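(* Let $\Sigma=(\sigma_1,\dots,\sigma_k)$ be a mixed substitution system on a finite set of prototiles $\mathcal{F}$ in $\mathbb{R}^d$. Then $\mathbb{X}_{\Sigma,\Omega}\subset\mathbb{Y}_{\Sigma,\Omega}$.
   Context: Tiles are compact sets equal to the closure of their interior; patches are tessellations of bounded sets by tiles with pairwise disjoint interiors, tilings are tessellations of $\mathbb{R}^d$. $\mathcal{F}=\{T_1,\dots,T_n\}$ is a finite set of prototiles and $\mathcal{F}^*$ the set of patches of translates of prototiles up to translation. A substitution rule with inflation factor $\xi>1$ is a map $\sigma:\mathcal{F}\to\mathcal{F}^*$ with $\operatorname{supp}\sigma(T_i)=\xi T_i$, extended to patches tile by tile ($T_i+t\mapsto\sigma(T_i)+\xi t$); it is primitive if some power of its substitution matrix (entries $a_{ij}=$ number of tiles that are translates of $T_i$ in $\sigma(T_j)$) is strictly positive. A mixed substitution system is a tuple $\Sigma=(\sigma_1,\dots,\sigma_k)$ of primitive substitution rules on $\mathcal{F}$. Let $\mathcal{A}=\{1,\dots,k\}$, $\Omega=\mathcal{A}^{\mathbb{N}}$, and $w(m)=(w_1,\dots,w_m)$. For a finite word $a=(a_1,\dots,a_m)$ define $a.P=\sigma_{a_1}(\sigma_{a_2}(\cdots\sigma_{a_m}(P)\cdots))$ (left action) and $P.a=\sigma_{a_m}(\sigma_{a_{m-1}}(\cdots\sigma_{a_1}(P)\cdots))$ (right action). For $w\in\Omega$ let $\mathcal{P}_w=\{w(m).T:T\in\mathcal{F},m\in\mathbb{N}\}$ and $\mathcal{R}_w=\{T.w(m):T\in\mathcal{F},m\in\mathbb{N}\}$.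 $\mathbb{X}_{\Sigma,w}$ (resp. $\mathbb{Y}_{\Sigma,w}$) is the set of tilings of $\mathbb{R}^d$ every finite patch of which is a translate of a sub-patch of some element of $\mathcal{P}_w$ (resp. $\mathcal{R}_w$), and $\mathbb{X}_{\Sigma,\Omega}=\bigcup_{w\in\Omega}\mathbb{X}_{\Sigma,w}$, $\mathbb{Y}_{\Sigma,\Omega}=\bigcup_{w\in\Omega}\mathbb{Y}_{\Sigma,w}$. *)

theory Defs
  imports "HOL-Analysis.Analysis"
begin

definition is_tile :: "'a::euclidean_space set \<Rightarrow> bool" where
  "is_tile T \<longleftrightarrow> T \<noteq> {} \<and> compact T \<and> closure (interior T) = T"

definition tr :: "'a::euclidean_space \<Rightarrow> 'a set \<Rightarrow> 'a set" where
  "tr v T = (\<lambda>x. x + v) ` T"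

definition trp :: "'a::euclidean_space \<Rightarrow> 'a set set \<Rightarrow> 'a set set" where
  "trp v P = tr v ` P"

definition dil :: "real \<Rightarrow> 'a::euclidean_space set \<Rightarrow> 'a set" where
  "dil c T = (\<lambda>x. c *\<^sub>R x) ` T"

definition supp :: "'a set set \<Rightarrow> 'a set" where
  "supp P = \<Union> P"

definition is_patch :: "'a::euclidean_space set set \<Rightarrow> bool" where
  "is_patch P \<longleftrightarrow> (\<forall>T\<in>P. is_tile T) \<and>
     pairwise (\<lambda>S T. interior S \<inter> interior T = {}) P \<and> bounded (supp P)"

definition is_tiling :: "'a::euclidean_space set set \<Rightarrow> bool" where
  "is_tiling P \<longleftrightarrow> (\<forall>T\<in>P. is_tile T) \<and>
     pairwise (\<lambda>S T. interior S \<inter> interior T = {}) P \<and> supp P = UNIV"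

definition prototiles :: "'a::euclidean_space set set \<Rightarrow> bool" where
  "prototiles F \<longleftrightarrow> finite F \<and> F \<noteq> {} \<and> (\<forall>T\<in>F. is_tile T) \<and>
     (\<forall>S\<in>F. \<forall>T\<in>F. (\<exists>v. S = tr v T) \<longrightarrow> S = T)"

definition F_patch :: "'a::euclidean_space set set \<Rightarrow> 'a set set \<Rightarrow> bool" where
  "F_patch F P \<longleftrightarrow> is_patch P \<and> (\<forall>S\<in>P. \<exists>T\<in>F. \<exists>v. S = tr v T)"

definition subst_rule :: "'a::euclidean_space set set \<Rightarrow> real \<Rightarrow> ('a set \<Rightarrow> 'a set set) \<Rightarrow> bool" where
  "subst_rule F \<xi> \<sigma> \<longleftrightarrow> \<xi> > 1 \<and> (\<forall>T\<in>F. F_patch F (\<sigma> T) \<and> supp (\<sigma> T) = dil \<xi> T)"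

definition subst_matrix :: "('a::euclidean_space set \<Rightarrow> 'a set set) \<Rightarrow> 'a set \<Rightarrow> 'a set \<Rightarrow> nat" where
  "subst_matrix \<sigma> S T = card {U \<in> \<sigma> T. \<exists>v. U = tr v S}"

fun mat_pow :: "'b set \<Rightarrow> ('b \<Rightarrow> 'b \<Rightarrow> nat) \<Rightarrow> nat \<Rightarrow> 'b \<Rightarrow> 'b \<Rightarrow> nat" where
  "mat_pow I A 0 S T = (if S = T then 1 else 0)"
| "mat_pow I A (Suc p) S T = (\<Sum>U\<in>I. A S U * mat_pow I A p U T)"

definition primitive :: "'a::euclidean_space set set \<Rightarrow> ('a set \<Rightarrow> 'a set set) \<Rightarrow> bool" where
  "primitive F \<sigma> \<longleftrightarrow> (\<exists>p>0. \<forall>S\<in>F. \<forall>T\<in>F. mat_pow F (subst_matrix \<sigma>) p S T > 0)"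

definition subst_patch :: "'a::euclidean_space set set \<Rightarrow> real \<Rightarrow> ('a set \<Rightarrow> 'a set set)
     \<Rightarrow> 'a set set \<Rightarrow> 'a set set" where
  "subst_patch F \<xi> \<sigma> P = \<Union> {trp (\<xi> *\<^sub>R t) (\<sigma> T) | T t. T \<in> F \<and> tr t T \<in> P}"

definition mixed_system :: "'a::euclidean_space set set \<Rightarrow> nat \<Rightarrow> (nat \<Rightarrow> real)
     \<Rightarrow> (nat \<Rightarrow> 'a set \<Rightarrow> 'a set set) \<Rightarrow> bool" where
  "mixed_system F k \<xi> \<sigma> \<longleftrightarrow> prototiles F \<and> k \<ge> 1 \<and>
     (\<forall>i\<in>{1..k}. subst_rule F (\<xi> i) (\<sigma> i) \<and> primitive F (\<sigma> i))"

text \<open>Left action \<open>a.P = \<sigma>_{a1}(\<dots>\<sigma>_{am}(P))\<close>, right action \<open>P.a = \<sigma>_{am}(\<dots>\<sigma>_{a1}(P))\<close>.\<close>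
definition left_act :: "'a::euclidean_space set set \<Rightarrow> (nat \<Rightarrow> real) \<Rightarrow> (nat \<Rightarrow> 'a set \<Rightarrow> 'a set set)
     \<Rightarrow> nat list \<Rightarrow> 'a set set \<Rightarrow> 'a set set" where
  "left_act F \<xi> \<sigma> a P = foldr (\<lambda>i Q. subst_patch F (\<xi> i) (\<sigma> i) Q) a P"

definition right_act :: "'a::euclidean_space set set \<Rightarrow> (nat \<Rightarrow> real) \<Rightarrow> (nat \<Rightarrow> 'a set \<Rightarrow> 'a set set)
     \<Rightarrow> 'a set set \<Rightarrow> nat list \<Rightarrow> 'a set set" where
  "right_act F \<xi> \<sigma> P a = foldl (\<lambda>Q i. subst_patch F (\<xi> i) (\<sigma> i) Q) P a"

text \<open>\<open>\<Omega> = {1..k}^\<nat>\<close>, sequences written \<open>w 0, w 1, \<dots>\<close> (i.e. \<open>w_1 = w 0\<close>).\<close>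
definition Omega :: "nat \<Rightarrow> (nat \<Rightarrow> nat) set" where
  "Omega k = {w. \<forall>n. w n \<in> {1..k}}"

definition prefix :: "(nat \<Rightarrow> nat) \<Rightarrow> nat \<Rightarrow> nat list" where
  "prefix w m = map w [0..<m]"

definition P_w where
  "P_w F \<xi> \<sigma> w = {left_act F \<xi> \<sigma> (prefix w m) {T} | T m. T \<in> F \<and> m \<ge> 1}"

definition R_w where
  "R_w F \<xi> \<sigma> w = {right_act F \<xi> \<sigma> {T} (prefix w m) | T m. T \<in> F \<and> m \<ge> 1}"

definition hull_tilings :: "'a::euclidean_space set set set \<Rightarrow> 'a set set set" where
  "hull_tilings \<P> = {\<T>. is_tiling \<T> \<and>
     (\<forall>Q. Q \<subseteq> \<T> \<and> finite Q \<longrightarrow> (\<exists>P\<in>\<P>. \<exists>v. trp v Q \<subseteq> P))}"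

definition X_w where "X_w F \<xi> \<sigma> w = hull_tilings (P_w F \<xi> \<sigma> w)"
definition Y_w where "Y_w F \<xi> \<sigma> w = hull_tilings (R_w F \<xi> \<sigma> w)"

definition X_Omega where "X_Omega F k \<xi> \<sigma> = (\<Union>w\<in>Omega k. X_w F \<xi> \<sigma> w)"
definition Y_Omega where "Y_Omega F k \<xi> \<sigma> = (\<Union>w\<in>Omega k. Y_w F \<xi> \<sigma> w)"

end

theory Submission
  imports Defs
begin

lemma tr_tr: "tr a (tr b T) = tr (b + a) T"
  unfolding tr_def by (auto simp: image_image add.assoc)

lemma tr_0: "tr 0 T = T"
  unfolding tr_def by simp

lemma trp_trp: "trp a (trp b P) = trp (b + a) P"
  unfolding trp_def by (auto simp: image_image tr_tr)

lemma trp_mono: "P \<subseteq> Q \<Longrightarrow> trp a P \<subseteq> trp a Q"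
  unfolding trp_def by auto

lemma subst_mono:
  assumes h: "trp v P \<subseteq> Q"
  shows "trp (c *\<^sub>R v) (subst_patch F c s P) \<subseteq> subst_patch F c s Q"
proof
  fix x assume "x \<in> trp (c *\<^sub>R v) (subst_patch F c s P)"
  then obtain T t S where T: "T \<in> F" "tr t T \<in> P" "S \<in> s T" and
    x: "x = tr (c *\<^sub>R v) (tr (c *\<^sub>R t) S)"
    unfolding subst_patch_def trp_def by blast
  have "tr v (tr t T) \<in> Q" using h T(2) unfolding trp_def by blast
  hence q: "tr (t + v) T \<in> Q" by (simp add: tr_tr)
  have "x = tr (c *\<^sub>R (t + v)) S" using x by (simp add: tr_tr scaleR_add_right)
  hence "x \<in> trp (c *\<^sub>R (t + v)) (s T)" using T(3) unfolding trp_def by blast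
  thus "x \<in> subst_patch F c s Q" unfolding subst_patch_def using T(1) q by blast
qed

lemma right_act_mono:
  "trp v P \<subseteq> Q \<Longrightarrow> \<exists>v'. trp v' (right_act F \<xi> \<sigma> P b) \<subseteq> right_act F \<xi> \<sigma> Q b"
proof (induction b arbitrary: P Q v)
  case Nil
  then show ?case by (auto simp: right_act_def)
next
  case (Cons i b)
  have "trp (\<xi> i *\<^sub>R v) (subst_patch F (\<xi> i) (\<sigma> i) P) \<subseteq> subst_patch F (\<xi> i) (\<sigma> i) Q"
    by (rule subst_mono[OF Cons.prems])
  from Cons.IH[OF this] show ?case by (simp add: right_act_def)
qed

lemma right_act_append: "right_act F \<xi> \<sigma> P (u @ r) = right_act F \<xi> \<sigma> (right_act F \<xi> \<sigma> P u) r"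
  by (simp add: right_act_def)

lemma left_right: "left_act F \<xi> \<sigma> a P = right_act F \<xi> \<sigma> P (rev a)"
  by (simp add: left_act_def right_act_def foldr_conv_foldl)

lemma prim_pred:
  assumes ms: "mixed_system F k \<xi> \<sigma>" and i: "i \<in> {1..k}" and T: "T \<in> F"
  shows "\<exists>U\<in>F. \<exists>t. tr t T \<in> \<sigma> i U"
proof -
  have fin: "finite F" using ms unfolding mixed_system_def prototiles_def by blast
  have "primitive F (\<sigma> i)" using ms i unfolding mixed_system_def by blast
  then obtain p where p: "p > 0" "\<forall>S\<in>F. \<forall>T\<in>F. mat_pow F (subst_matrix (\<sigma> i)) p S T > 0"
    unfolding primitive_def by blast
  then obtain q where q: "p = Suc q" using gr0_implies_Suc by blast
  have "mat_pow F (subst_matrix (\<sigma> i)) (Suc q) T T > 0"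
    using p(2) T q by blast
  hence "(\<Sum>U\<in>F. subst_matrix (\<sigma> i) T U * mat_pow F (subst_matrix (\<sigma> i)) q U T) > 0"
    by (simp only: mat_pow.simps)
  then obtain U where U: "U \<in> F" "subst_matrix (\<sigma> i) T U * mat_pow F (subst_matrix (\<sigma> i)) q U T \<noteq> 0"
    by (metis (no_types, lifting) less_irrefl sum.neutral)
  hence "card {V \<in> \<sigma> i U. \<exists>v. V = tr v T} \<noteq> 0" unfolding subst_matrix_def by simp
  hence "{V \<in> \<sigma> i U. \<exists>v. V = tr v T} \<noteq> {}" by (metis card.empty)
  thus ?thesis using U(1) by blast
qed

lemma word_pred:
  assumes ms: "mixed_system F k \<xi> \<sigma>"
  shows "set u \<subseteq> {1..k} \<Longrightarrow> T \<in> F \<Longrightarrow> \<exists>T'\<in>F. \<exists>v. trp v {T} \<subseteq> right_act F \<xi> \<sigma> {T'} u"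
proof (induction u arbitrary: T rule: rev_induct)
  case Nil
  have "trp 0 {T} \<subseteq> right_act F \<xi> \<sigma> {T} []" by (simp add: right_act_def trp_def tr_0)
  then show ?case using Nil.prems(2) by blast
next
  case (snoc i u)
  have i: "i \<in> {1..k}" and u: "set u \<subseteq> {1..k}" using snoc.prems(1) by auto
  obtain U t where U: "U \<in> F" "tr t T \<in> \<sigma> i U" using prim_pred[OF ms i snoc.prems(2)] by blast
  have sU: "\<sigma> i U \<subseteq> subst_patch F (\<xi> i) (\<sigma> i) {U}"
  proof
    fix x assume "x \<in> \<sigma> i U"
    hence "x \<in> trp (\<xi> i *\<^sub>R 0) (\<sigma> i U)" by (simp add: trp_def tr_0)
    moreover have "tr 0 U \<in> {U}" by (simp add: tr_0)
    ultimately show "x \<in> subst_patch F (\<xi> i) (\<sigma> i) {U}" unfolding subst_patch_def using U(1) by blast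
  qed
  have a: "trp t {T} \<subseteq> subst_patch F (\<xi> i) (\<sigma> i) {U}" using U(2) sU by (auto simp: trp_def)
  obtain T' v where T': "T' \<in> F" "trp v {U} \<subseteq> right_act F \<xi> \<sigma> {T'} u" using snoc.IH[OF u U(1)] by blast
  have b: "trp (\<xi> i *\<^sub>R v) (subst_patch F (\<xi> i) (\<sigma> i) {U}) \<subseteq> right_act F \<xi> \<sigma> {T'} (u @ [i])"
    using subst_mono[OF T'(2), of "\<xi> i" F "\<sigma> i"] by (simp add: right_act_def)
  have "trp (t + \<xi> i *\<^sub>R v) {T} \<subseteq> right_act F \<xi> \<sigma> {T'} (u @ [i])"
    using trp_mono[OF a, of "\<xi> i *\<^sub>R v"] b by (simp add: trp_trp)
  thus ?case using T' by blast
qed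

fun blocks :: "(nat \<Rightarrow> nat) \<Rightarrow> nat \<Rightarrow> nat list" where
  "blocks w 0 = []"
| "blocks w (Suc m) = blocks w m @ rev (prefix w (Suc m))"

lemma length_blocks: "m \<le> length (blocks w m)"
  by (induction m) (auto simp: prefix_def)

lemma blocks_ext: "m \<le> m' \<Longrightarrow> \<exists>ys. blocks w m' = blocks w m @ ys"
proof (induction m' rule: dec_induct)
  case base
  then show ?case by simp
next
  case (step n)
  then show ?case by auto
qed

lemma blocks_nth:
  assumes "n < length (blocks w m)"
  shows "blocks w (Suc n) ! n = blocks w m ! n"
proof -
  obtain ys where ys: "blocks w (max m (Suc n)) = blocks w m @ ys" using blocks_ext[of m "max m (Suc n)" w] by auto
  obtain zs where zs: "blocks w (max m (Suc n)) = blocks w (Suc n) @ zs" using blocks_ext[of "Suc n" "max m (Suc n)" w] by auto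
  have l: "n < length (blocks w (Suc n))" using length_blocks[of "Suc n" w] by simp
  have "blocks w (max m (Suc n)) ! n = blocks w m ! n" using ys assms by (simp add: nth_append del: blocks.simps)
  moreover have "blocks w (max m (Suc n)) ! n = blocks w (Suc n) ! n" using zs l by (simp add: nth_append del: blocks.simps)
  ultimately show ?thesis by simp
qed

lemma prefix_blocks:
  "prefix (\<lambda>n. blocks w (Suc n) ! n) (length (blocks w m)) = blocks w m"
  by (rule nth_equalityI) (simp_all add: prefix_def blocks_nth del: blocks.simps)

lemma set_blocks: "w \<in> Omega k \<Longrightarrow> set (blocks w m) \<subseteq> {1..k}"
  by (induction m) (auto simp: prefix_def Omega_def)

theorem lemma6p2:
  fixes F :: "'a::euclidean_space set set"
    and k :: nat and \<xi> :: "nat \<Rightarrow> real" and \<sigma> :: "nat \<Rightarrow> 'a set \<Rightarrow> 'a set set"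
  assumes "mixed_system F k \<xi> \<sigma>"
  shows "X_Omega F k \<xi> \<sigma> \<subseteq> Y_Omega F k \<xi> \<sigma>"
proof
  fix X assume "X \<in> X_Omega F k \<xi> \<sigma>"
  then obtain w where w: "w \<in> Omega k" and X: "X \<in> X_w F \<xi> \<sigma> w"
    unfolding X_Omega_def by blast
  define w' where "w' = (\<lambda>n. blocks w (Suc n) ! n)"
  have w': "w' \<in> Omega k"
    unfolding Omega_def w'_def
  proof (intro CollectI allI)
    fix n
    have "n < length (blocks w (Suc n))" using length_blocks[of "Suc n" w] by simp
    hence "blocks w (Suc n) ! n \<in> set (blocks w (Suc n))" by (rule nth_mem)
    thus "blocks w (Suc n) ! n \<in> {1..k}" using set_blocks[OF w] by blast
  qed
  have "X \<in> Y_w F \<xi> \<sigma> w'"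
    unfolding Y_w_def hull_tilings_def
  proof (intro CollectI conjI allI impI)
    show "is_tiling X" using X unfolding X_w_def hull_tilings_def by blast
    fix Q assume Q: "Q \<subseteq> X \<and> finite Q"
    then obtain P v where P: "P \<in> P_w F \<xi> \<sigma> w" and v: "trp v Q \<subseteq> P"
      using X unfolding X_w_def hull_tilings_def by blast
    then obtain T m where T: "T \<in> F" "m \<ge> 1" and Pd: "P = left_act F \<xi> \<sigma> (prefix w m) {T}"
      unfolding P_w_def by blast
    obtain m' where m': "m = Suc m'" using T(2) by (cases m) auto
    define r where "r = rev (prefix w m)"
    have bm: "blocks w m = blocks w m' @ r" using m' r_def by simp
    obtain T' v0 where T': "T' \<in> F" "trp v0 {T} \<subseteq> right_act F \<xi> \<sigma> {T'} (blocks w m')"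
      using word_pred[OF assms set_blocks[OF w] T(1)] by blast
    obtain v1 where v1: "trp v1 (right_act F \<xi> \<sigma> {T} r) \<subseteq> right_act F \<xi> \<sigma> (right_act F \<xi> \<sigma> {T'} (blocks w m')) r"
      using right_act_mono[OF T'(2)] by blast
    define n where "n = length (blocks w m)"
    have n1: "n \<ge> 1" using length_blocks[of m w] T(2) n_def by simp
    have eq: "right_act F \<xi> \<sigma> (right_act F \<xi> \<sigma> {T'} (blocks w m')) r = right_act F \<xi> \<sigma> {T'} (prefix w' n)"
      using bm prefix_blocks[of w m] unfolding w'_def n_def by (simp add: right_act_append)
    have inR: "right_act F \<xi> \<sigma> {T'} (prefix w' n) \<in> R_w F \<xi> \<sigma> w'"
      unfolding R_w_def using T'(1) n1 by blast
    have "trp (v + v1) Q = trp v1 (trp v Q)" by (simp add: trp_trp)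
    also have "\<dots> \<subseteq> trp v1 P" using v by (rule trp_mono)
    also have "\<dots> \<subseteq> right_act F \<xi> \<sigma> {T'} (prefix w' n)"
      using v1 eq unfolding Pd left_right r_def by simp
    finally show "\<exists>P\<in>R_w F \<xi> \<sigma> w'. \<exists>v. trp v Q \<subseteq> P" using inR by blast
  qed
  thus "X \<in> Y_Omega F k \<xi> \<sigma>" unfolding Y_Omega_def using w' by blast
qed

end
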